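(* Let ${\mathcal M}$ be a $q$-matroid on $\mathbb{F}_q^n$ of rank $r\ge1$, and let $F_1,\dots,F_t$ be its bases listed in increasing order with respect to $\prec_q^r$. Order the facets of the order complex $I_{{\mathcal M}}$ by $\prec_\ell$ and let $\mathcal{R}$ be the associated restriction operator. Then there exists a facet $A$ of $I_{{\mathcal M}}$ with $\mathcal{R}(A)=A$ if and only if there exist indices $1\le i<j\le t$ such that $\dim_{\mathbb{F}_q}(F_i\cap F_j)=r-1$ and $\min(F_j\setminus\{0\})\notin F_i$, where the minimum is taken with respect to $\prec$.
   Context: A $q$-matroid is a pair $(E,\rho)$, $E=\mathbb{F}_q^n$, with $\rho$ from subspaces to $\mathbb{Z}_{\ge0}$ satisfying $0\le\rho(X)\le\dim X$, monotonicity, and $\rho(X+Y)+\rho(X\cap Y)\le\rho(X)+\rho(Y)$; rank $=\rho(E)$; $U$ is independent if $\rho(U)=\dim U$; bases are maximal independent subspaces (all of dimension $r$). Fix a total order $\prec$ on $\mathbb{F}_q$ with $0\prec1\prec\alpha$ for all $\alpha\ne0,1$, extended lexicographically to $\mathbb{F}_q^n$ and to tuples in $(\mathbb{F}_q^n)^k$. For a $k$-dimensional subspace $U$ with reduced row echelon generator matrix having rows $u_k,u_{k-1},\dots,u_1$ from top to bottom, its reduced generator is $(u_1,\dots,u_k)$; the order $\prec_q^k$ on $k$-dimensional subspaces is the lexicographic order of reduced generators. The order complex $I_{{\mathcal M}}$ is the simplicial complex whose vertices are the nonzero independent subspaces and whose faces are chains of them; its facets are the chains $A=(A_1\subsetneq\cdots\subsetneq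 A_r)$ of independent subspaces with $\dim A_m=m$. For two such facets $U,V$, $U\prec_\ell V$ iff, for the largest index $e$ with $U_e\ne V_e$, one has $U_e\prec_q^e V_e$; this linear order of facets is a shelling of $I_{{\mathcal M}}$. For a facet $A$, $\mathcal{R}(A)$ is the set of vertices $A_m$ of $A$ such that $A\setminus\{A_m\}$ is a face of some facet preceding $A$ in the order $\prec_\ell$. *)

theory Defs
  imports "HOL-Analysis.Cartesian_Space"
begin

text \<open>Ambient space: E = F_q^n is modelled as the type 'a^('n::{finite,linorder}), where 'a is a finite
field (so 'a = F_q) and 'n is a finite linearly ordered index type with CARD('n) = n;
the order of 'n gives the coordinate positions 1, ..., n.
The total order on F_q is given by an injective key  fo :: 'a => nat  with
fo 0 < fo 1 < fo a for all a not in {0,1}.\<close>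

definition field_order :: "('a::{finite,field} \<Rightarrow> nat) \<Rightarrow> bool" where
  "field_order fo \<longleftrightarrow> inj fo \<and> fo 0 < fo 1 \<and> (\<forall>a. a \<noteq> 0 \<and> a \<noteq> 1 \<longrightarrow> fo 1 < fo a)"

definition vlt :: "('a \<Rightarrow> nat) \<Rightarrow> 'a^('n::{finite,linorder}) \<Rightarrow> 'a^('n::{finite,linorder}) \<Rightarrow> bool" where
  "vlt fo u v \<longleftrightarrow> (\<exists>i. u$i \<noteq> v$i \<and> (\<forall>j<i. u$j = v$j) \<and> fo (u$i) < fo (v$i))"

definition llt :: "('b \<Rightarrow> 'b \<Rightarrow> bool) \<Rightarrow> 'b list \<Rightarrow> 'b list \<Rightarrow> bool" where
  "llt lt xs ys \<longleftrightarrow> (\<exists>i. i < length xs \<and> i < length ys \<and> xs!i \<noteq> ys!i \<and>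
      (\<forall>j<i. xs!j = ys!j) \<and> lt (xs!i) (ys!i))"

definition is_rref :: "('a::field^('n::{finite,linorder})) list \<Rightarrow> bool" where
  "is_rref rs \<longleftrightarrow> (\<exists>p :: nat \<Rightarrow> 'n.
      (\<forall>i j. i < j \<and> j < length rs \<longrightarrow> p i < p j) \<and>
      (\<forall>i<length rs. (rs!i)$(p i) = 1 \<and> (\<forall>c<p i. (rs!i)$c = 0) \<and>
         (\<forall>i'<length rs. i' \<noteq> i \<longrightarrow> (rs!i')$(p i) = 0)))"

text \<open>Reduced generator (u_1, ..., u_k) of a subspace U: the rows u_k, ..., u_1 of the
reduced row echelon generator matrix of U, read from bottom to top.\<close>
definition red_gen :: "('a::field^('n::{finite,linorder})) set \<Rightarrow> ('a^('n::{finite,linorder})) list" where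
  "red_gen U = rev (THE rs. is_rref rs \<and> vec.span (set rs) = U)"

definition sub_lt :: "('a::{finite,field} \<Rightarrow> nat) \<Rightarrow> ('a^('n::{finite,linorder})) set \<Rightarrow> ('a^('n::{finite,linorder})) set \<Rightarrow> bool" where
  "sub_lt fo U V \<longleftrightarrow> llt (vlt fo) (red_gen U) (red_gen V)"

definition vmin :: "('a \<Rightarrow> nat) \<Rightarrow> ('a^('n::{finite,linorder})) set \<Rightarrow> 'a^('n::{finite,linorder})" where
  "vmin fo S = (THE v. v \<in> S \<and> (\<forall>w\<in>S. w \<noteq> v \<longrightarrow> vlt fo v w))"

definition qmatroid :: "(('a::{finite,field}^('n::{finite,linorder})) set \<Rightarrow> nat) \<Rightarrow> bool" where
  "qmatroid \<rho> \<longleftrightarrow>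
     (\<forall>X. vec.subspace X \<longrightarrow> \<rho> X \<le> vec.dim X) \<and>
     (\<forall>X Y. vec.subspace X \<and> vec.subspace Y \<and> X \<subseteq> Y \<longrightarrow> \<rho> X \<le> \<rho> Y) \<and>
     (\<forall>X Y. vec.subspace X \<and> vec.subspace Y \<longrightarrow>
        \<rho> {x + y | x y. x \<in> X \<and> y \<in> Y} + \<rho> (X \<inter> Y) \<le> \<rho> X + \<rho> Y)"

definition qrank :: "(('a::field^('n::{finite,linorder})) set \<Rightarrow> nat) \<Rightarrow> nat" where
  "qrank \<rho> = \<rho> UNIV"

definition indep :: "(('a::field^('n::{finite,linorder})) set \<Rightarrow> nat) \<Rightarrow> ('a^('n::{finite,linorder})) set \<Rightarrow> bool" where
  "indep \<rho> U \<longleftrightarrow> vec.subspace U \<and> \<rho> U = vec.dim U"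

definition qbasis :: "(('a::field^('n::{finite,linorder})) set \<Rightarrow> nat) \<Rightarrow> ('a^('n::{finite,linorder})) set \<Rightarrow> bool" where
  "qbasis \<rho> B \<longleftrightarrow> indep \<rho> B \<and> (\<forall>U. indep \<rho> U \<and> B \<subseteq> U \<longrightarrow> U = B)"

text \<open>Facets of the order complex: chains A_1 < ... < A_r of independent subspaces
with dim A_m = m, represented as the list [A_1, ..., A_r] (so A_m = A!(m-1)).\<close>
definition facet :: "(('a::field^('n::{finite,linorder})) set \<Rightarrow> nat) \<Rightarrow> ('a^('n::{finite,linorder})) set list \<Rightarrow> bool" where
  "facet \<rho> A \<longleftrightarrow> length A = qrank \<rho> \<and>
     (\<forall>m<length A. indep \<rho> (A!m) \<and> vec.dim (A!m) = Suc m) \<and>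
     (\<forall>m. Suc m < length A \<longrightarrow> A!m \<subset> A!(Suc m))"

definition facet_lt :: "('a::{finite,field} \<Rightarrow> nat) \<Rightarrow> ('a^('n::{finite,linorder})) set list \<Rightarrow> ('a^('n::{finite,linorder})) set list \<Rightarrow> bool" where
  "facet_lt fo U V \<longleftrightarrow> (\<exists>e. e < length U \<and> e < length V \<and> U!e \<noteq> V!e \<and>
      (\<forall>e'. e < e' \<and> e' < length U \<longrightarrow> U!e' = V!e') \<and> sub_lt fo (U!e) (V!e))"

definition restr :: "('a::{finite,field} \<Rightarrow> nat) \<Rightarrow> (('a^('n::{finite,linorder})) set \<Rightarrow> nat) \<Rightarrow>
    ('a^('n::{finite,linorder})) set list \<Rightarrow> ('a^('n::{finite,linorder})) set set" where
  "restr fo \<rho> A = {A!m | m. m < length A \<and>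
      (\<exists>B. facet \<rho> B \<and> facet_lt fo B A \<and> set A - {A!m} \<subseteq> set B)}"

end

theory Submission
  imports Defs
begin


definition rrefp :: "('a::field^('n::{finite,linorder})) list \<Rightarrow> (nat \<Rightarrow> 'n) \<Rightarrow> bool" where
  "rrefp rs p \<longleftrightarrow> (\<forall>i j. i < j \<and> j < length rs \<longrightarrow> p i < p j) \<and>
      (\<forall>i<length rs. (rs!i)$(p i) = 1 \<and> (\<forall>c<p i. (rs!i)$c = 0) \<and>
         (\<forall>i'<length rs. i' \<noteq> i \<longrightarrow> (rs!i')$(p i) = 0))"

lemma is_rref_alt: "is_rref rs \<longleftrightarrow> (\<exists>p. rrefp rs p)"
  unfolding is_rref_def rrefp_def by blast

lemma rrefpD:
  assumes "rrefp rs p"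
  shows "\<And>i j. i < j \<Longrightarrow> j < length rs \<Longrightarrow> p i < p j"
    "\<And>i. i < length rs \<Longrightarrow> (rs!i)$(p i) = 1"
    "\<And>i c. i < length rs \<Longrightarrow> c < p i \<Longrightarrow> (rs!i)$c = 0"
    "\<And>i i'. i < length rs \<Longrightarrow> i' < length rs \<Longrightarrow> i' \<noteq> i \<Longrightarrow> (rs!i')$(p i) = 0"
  using assms unfolding rrefp_def by blast+

lemma rref_rep:
  fixes rs :: "('a::field^('n::{finite,linorder})) list"
  assumes p: "rrefp rs p"
    and u: "u \<in> vec.span (set rs)"
  shows "u = (\<Sum>j<length rs. (u$(p j)) *s rs!j)"
  using u
proof (induction rule: vec.span_induct)
  case base
  show ?case unfolding vec.subspace_def
  proof (intro conjI ballI allI)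
    fix x y assume "x \<in> {u. u = (\<Sum>j<length rs. (u$(p j)) *s rs!j)}" "y \<in> {u. u = (\<Sum>j<length rs. (u$(p j)) *s rs!j)}"
    then have "x + y = (\<Sum>j<length rs. (x$(p j)) *s rs!j) + (\<Sum>j<length rs. (y$(p j)) *s rs!j)" by simp
    also have "\<dots> = (\<Sum>j<length rs. ((x+y)$(p j)) *s rs!j)"
      by (simp add: sum.distrib[symmetric] vector_sadd_rdistrib)
    finally show "x + y \<in> {u. u = (\<Sum>j<length rs. (u$(p j)) *s rs!j)}" unfolding mem_Collect_eq .
  next
    fix c x assume "x \<in> {u. u = (\<Sum>j<length rs. (u$(p j)) *s rs!j)}"
    then have "c *s x = c *s (\<Sum>j<length rs. (x$(p j)) *s rs!j)" by simp
    also have "\<dots> = (\<Sum>j<length rs. c *s ((x$(p j)) *s rs!j))" by (rule vec.scale_sum_right)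
    also have "\<dots> = (\<Sum>j<length rs. ((c *s x)$(p j)) *s rs!j)" by (simp add: vector_smult_assoc)
    finally show "c *s x \<in> {u. u = (\<Sum>j<length rs. (u$(p j)) *s rs!j)}" unfolding mem_Collect_eq .
  qed simp
next
  case (step x)
  then obtain i where i: "i < length rs" "x = rs!i" by (auto simp: in_set_conv_nth)
  have "(\<Sum>j<length rs. (x$(p j)) *s rs!j) = (\<Sum>j<length rs. (if j = i then rs!i else 0))"
    using rrefpD[OF p] i by (intro sum.cong) auto
  also have "\<dots> = rs!i" using i by simp
  finally show ?case using i by simp
qed

lemma rref_comp:
  assumes p: "rrefp rs p" and u: "u \<in> vec.span (set rs)"
  shows "u$c = (\<Sum>j<length rs. u$(p j) * (rs!j)$c)"
proof -
  have "u$c = (\<Sum>j<length rs. (u$(p j)) *s rs!j)$c" using rref_rep[OF p u] by simp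
  then show ?thesis by simp
qed

lemma rref_zero:
  assumes p: "rrefp rs p" and u: "u \<in> vec.span (set rs)"
    and z: "\<forall>j<length rs. u$(p j) = 0"
  shows "u = 0"
proof -
  have "u = (\<Sum>j<length rs. (u$(p j)) *s rs!j)" by (rule rref_rep[OF p u])
  also have "\<dots> = 0" using z by simp
  finally show ?thesis .
qed

lemma rref_lead0:
  assumes p: "rrefp rs p" and u: "u \<in> vec.span (set rs)"
    and j0: "j0 < length rs" "\<forall>j<j0. u$(p j) = 0" and c: "c < p j0"
  shows "u$c = 0"
proof -
  have "u$c = (\<Sum>j<length rs. u$(p j) * (rs!j)$c)" by (rule rref_comp[OF p u])
  also have "\<dots> = 0"
  proof (intro sum.neutral ballI)
    fix j assume j: "j \<in> {..<length rs}"
    show "u$(p j) * (rs!j)$c = 0"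
    proof (cases "j < j0")
      case True then show ?thesis using j0 by simp
    next
      case False
      then have "p j0 \<le> p j" using rrefpD(1)[OF p, of j0 j] j by (cases "j = j0") auto
      then show ?thesis using rrefpD(3)[OF p, of j c] j c by simp
    qed
  qed
  finally show ?thesis .
qed

lemma rref_lead:
  assumes p: "rrefp rs p" and u: "u \<in> vec.span (set rs)" and nz: "u \<noteq> 0"
  obtains j0 where "j0 < length rs" "u$(p j0) \<noteq> 0" "\<forall>j<j0. u$(p j) = 0" "\<forall>c<p j0. u$c = 0"
proof -
  have ex: "\<exists>j. j < length rs \<and> u$(p j) \<noteq> 0" using rref_zero[OF p u] nz by blast
  define j0 where "j0 = (LEAST j. j < length rs \<and> u$(p j) \<noteq> 0)"
  have j0: "j0 < length rs" "u$(p j0) \<noteq> 0" using LeastI_ex[OF ex] unfolding j0_def by auto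
  have lt: "\<forall>j<j0. u$(p j) = 0"
  proof (intro allI impI)
    fix j assume "j < j0"
    then have "\<not> (j < length rs \<and> u$(p j) \<noteq> 0)" unfolding j0_def by (rule not_less_Least)
    then show "u$(p j) = 0" using \<open>j < j0\<close> j0 by auto
  qed
  show ?thesis using that[OF j0 lt] rref_lead0[OF p u j0(1) lt] by blast
qed

lemma rref_pivot_in:
  assumes p: "rrefp rs p" and p': "rrefp rs' p'"
    and sp: "vec.span (set rs') \<subseteq> vec.span (set rs)" and i: "i < length rs'"
  shows "\<exists>j<length rs. p' i = p j"
proof -
  let ?u = "rs'!i"
  have u: "?u \<in> vec.span (set rs)" using sp i by (meson nth_mem subsetD vec.span_base)
  have u1: "?u$(p' i) = 1" using rrefpD(2)[OF p' i] .
  then have nz: "?u \<noteq> 0" by auto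
  obtain j0 where j0: "j0 < length rs" "?u$(p j0) \<noteq> 0" "\<forall>c<p j0. ?u$c = 0"
    using rref_lead[OF p u nz] by metis
  have "p' i = p j0"
  proof (rule linorder_cases[of "p' i" "p j0"])
    assume "p' i < p j0" then show ?thesis using j0(3) u1 by simp
  next
    assume "p j0 < p' i" then show ?thesis using rrefpD(3)[OF p' i] j0(2) by blast
  qed
  then show ?thesis using j0(1) by blast
qed

lemma rref_sorted:
  assumes p: "rrefp rs p"
  shows "sorted (map p [0..<length rs]) \<and> distinct (map p [0..<length rs])"
proof -
  have "sorted_wrt (<) (map p [0..<length rs])"
    using rrefpD(1)[OF p] by (auto simp: sorted_wrt_iff_nth_less)
  then show ?thesis by (simp add: strict_sorted_iff)
qed

lemma rref_unique:
  assumes p: "rrefp rs p" and p': "rrefp rs' p'"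
    and sp: "vec.span (set rs') = vec.span (set rs)"
  shows "rs = rs'"
proof -
  have "set (map p [0..<length rs]) = set (map p' [0..<length rs'])"
  proof
    show "set (map p [0..<length rs]) \<subseteq> set (map p' [0..<length rs'])"
      using rref_pivot_in[OF p' p] sp by fastforce
    show "set (map p' [0..<length rs']) \<subseteq> set (map p [0..<length rs])"
      using rref_pivot_in[OF p p'] sp by fastforce
  qed
  then have eq: "map p [0..<length rs] = map p' [0..<length rs']"
    using rref_sorted[OF p] rref_sorted[OF p'] sorted_distinct_set_unique by blast
  then have len: "length rs = length rs'" by (metis length_map length_upt diff_zero)
  have pp: "\<And>j. j < length rs \<Longrightarrow> p j = p' j"
  proof -
    fix j assume j: "j < length rs"
    have "map p [0..<length rs] ! j = map p' [0..<length rs'] ! j" using eq by simp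
    then show "p j = p' j" using j len by simp
  qed
  show ?thesis
  proof (rule nth_equalityI[OF len])
    fix i assume i: "i < length rs"
    have u: "rs'!i \<in> vec.span (set rs)" using sp i len by (metis nth_mem vec.span_base)
    have "rs'!i = (\<Sum>j<length rs. ((rs'!i)$(p j)) *s rs!j)" by (rule rref_rep[OF p u])
    also have "\<dots> = (\<Sum>j<length rs. (if j = i then rs!i else 0))"
    proof (intro sum.cong refl)
      fix j assume j: "j \<in> {..<length rs}"
      show "((rs'!i)$(p j)) *s rs!j = (if j = i then rs!i else 0)"
        using pp[of j] j i len rrefpD(2,4)[OF p'] by auto
    qed
    also have "\<dots> = rs!i" using i by simp
    finally show "rs!i = rs'!i" by simp
  qed
qed



lemma rref_exists:
  fixes S :: "('a::field^('n::{finite,linorder})) set"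
  assumes "finite S"
  shows "\<exists>rs p. rrefp rs p \<and> vec.span (set rs) = vec.span S"
  using assms
proof (induction rule: finite_induct)
  case empty
  show ?case by (rule exI[of _ "[]"]) (simp add: rrefp_def)
next
  case (insert v S)
  then obtain rs p where p: "rrefp rs p" and sp: "vec.span (set rs) = vec.span S" by blast
  define n where "n = length rs"
  define s where "s = (\<Sum>j<n. (v$(p j)) *s rs!j)"
  define w where "w = v - s"
  have s_sp: "s \<in> vec.span (set rs)" unfolding s_def
    by (intro vec.span_sum vec.span_scale vec.span_base) (simp add: n_def)
  have sp1: "vec.span (insert v S) = vec.span (insert v (set rs))"
    by (simp add: vec.span_insert sp)
  have wp: "\<And>i. i < n \<Longrightarrow> w$(p i) = 0"
  proof -
    fix i assume i: "i < n"
    have "s$(p i) = (\<Sum>j<n. v$(p j) * (rs!j)$(p i))" unfolding s_def by simp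
    also have "\<dots> = (\<Sum>j<n. if j = i then v$(p i) else 0)"
      using rrefpD(2,4)[OF p] i unfolding n_def by (intro sum.cong) auto
    also have "\<dots> = v$(p i)" using i by simp
    finally show "w$(p i) = 0" unfolding w_def by simp
  qed
  show ?case
  proof (cases "w = 0")
    case True
    then have "v \<in> vec.span (set rs)" using s_sp unfolding w_def by simp
    then have "vec.span (insert v (set rs)) = vec.span (set rs)" by (rule vec.span_redundant)
    then show ?thesis using p sp1 by auto
  next
    case False
    define c where "c = Min {i. w$i \<noteq> 0}"
    have ne: "{i. w$i \<noteq> 0} \<noteq> {}" using False by (auto simp: vec_eq_iff)
    have c1: "w$c \<noteq> 0" unfolding c_def using Min_in[OF _ ne] by auto
    have c2: "\<And>i. i < c \<Longrightarrow> w$i = 0"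
    proof (rule ccontr)
      fix i assume "i < c" "w$i \<noteq> 0"
      then have "c \<le> i" unfolding c_def by (intro Min_le) auto
      then show False using \<open>i < c\<close> by simp
    qed
    have cnp: "\<And>j. j < n \<Longrightarrow> p j \<noteq> c" using wp c1 by metis
    define w' where "w' = inverse (w$c) *s w"
    have W1: "w'$c = 1" unfolding w'_def using c1 by simp
    have W2: "\<And>i. i < c \<Longrightarrow> w'$i = 0" unfolding w'_def using c2 by simp
    have W3: "\<And>j. j < n \<Longrightarrow> w'$(p j) = 0" unfolding w'_def using wp by simp
    define r' where "r' j = rs!j - ((rs!j)$c) *s w'" for j
    have R1: "\<And>j. j < n \<Longrightarrow> r' j $ p j = 1"
      unfolding r'_def using W3 rrefpD(2)[OF p] n_def by simp
    have R2: "\<And>j col. j < n \<Longrightarrow> col < p j \<Longrightarrow> r' j $ col = 0"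
    proof -
      fix j col assume j: "j < n" and col: "col < p j"
      show "r' j $ col = 0"
      proof (cases "p j < c")
        case True
        then show ?thesis unfolding r'_def using W2 rrefpD(3)[OF p] j col n_def by simp
      next
        case False
        then have "c < p j" using cnp[OF j] by simp
        then show ?thesis unfolding r'_def using rrefpD(3)[OF p] j col n_def by simp
      qed
    qed
    have R3: "\<And>j j'. j < n \<Longrightarrow> j' < n \<Longrightarrow> j' \<noteq> j \<Longrightarrow> r' j' $ p j = 0"
      unfolding r'_def using W3 rrefpD(4)[OF p] n_def by simp
    have R4: "\<And>j. r' j $ c = 0" unfolding r'_def using W1 by simp
    define m where "m = (if \<exists>j<n. c < p j then LEAST j. j < n \<and> c < p j else n)"
    have M1: "m \<le> n"
    proof (cases "\<exists>j<n. c < p j")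
      case True
      then have "m < n" unfolding m_def using LeastI_ex[of "\<lambda>j. j < n \<and> c < p j"] by auto
      then show ?thesis by simp
    qed (auto simp: m_def)
    have M2: "\<And>j. j < n \<Longrightarrow> (j < m \<longleftrightarrow> p j < c)"
    proof -
      fix j assume j: "j < n"
      show "j < m \<longleftrightarrow> p j < c"
      proof (cases "\<exists>j<n. c < p j")
        case True
        have mm: "m = (LEAST j. j < n \<and> c < p j)" using True unfolding m_def by simp
        have "(LEAST j. j < n \<and> c < p j) < n \<and> c < p (LEAST j. j < n \<and> c < p j)"
          by (rule LeastI_ex) (use True in blast)
        then have m: "m < n" "c < p m" unfolding mm by auto
        show ?thesis
        proof
          assume "j < m"
          then have "\<not> (j < n \<and> c < p j)" unfolding mm by (rule not_less_Least)
          then show "p j < c" using j cnp[OF j] by auto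
        next
          assume pj: "p j < c"
          show "j < m"
          proof (rule ccontr)
            assume "\<not> j < m"
            then have "p m \<le> p j" using rrefpD(1)[OF p, of m j] j n_def by (cases "m = j") auto
            then show False using pj m by simp
          qed
        qed
      next
        case False
        then show ?thesis using j cnp[OF j] unfolding m_def by auto
      qed
    qed
    define f where "f i = (if i < m then r' i else if i = m then w' else r' (i - 1))" for i
    define p2 where "p2 i = (if i < m then p i else if i = m then c else p (i - 1))" for i
    define rs2 where "rs2 = map f [0..<Suc n]"
    have len2: "length rs2 = Suc n" unfolding rs2_def by simp
    have nth2: "\<And>i. i < Suc n \<Longrightarrow> rs2!i = f i" unfolding rs2_def
      by (simp del: upt_Suc)
    have pm: "\<And>i j. i < j \<Longrightarrow> j < n \<Longrightarrow> p i < p j" using rrefpD(1)[OF p] n_def by simp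
    have mono2: "\<And>i j. i < j \<Longrightarrow> j < Suc n \<Longrightarrow> p2 i < p2 j"
    proof -
      fix i j assume ij: "i < j" "j < Suc n"
      have a: "\<And>k. k < n \<Longrightarrow> m \<le> k \<Longrightarrow> c < p k" using M2 cnp
        by (metis linorder_neqE not_le)
      have b: "\<And>k. k < m \<Longrightarrow> p k < c" by (metis M1 M2 less_le_trans)
      show "p2 i < p2 j"
      proof (cases "i < m")
        case True
        show ?thesis
        proof (cases "j < m")
          case True
          then show ?thesis using \<open>i < m\<close> pm[of i j] ij M1 by (simp add: p2_def)
        next
          case False
          then show ?thesis using \<open>i < m\<close> b[of i] a[of "j - 1"] ij by (cases "j = m") (auto simp: p2_def intro: less_trans)
        qed
      next
        case False
        then show ?thesis using a[of "j - 1"] pm[of "i - 1" "j - 1"] ij by (cases "i = m") (auto simp: p2_def)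
      qed
    qed
    define g where "g i = (if i < m then i else i - 1)" for i
    have G: "\<And>i. i < Suc n \<Longrightarrow> i \<noteq> m \<Longrightarrow> g i < n \<and> f i = r' (g i) \<and> p2 i = p (g i)"
      unfolding g_def f_def p2_def using M1 by auto
    have Ginj: "\<And>i i'. i \<noteq> m \<Longrightarrow> i' \<noteq> m \<Longrightarrow> i \<noteq> i' \<Longrightarrow> g i \<noteq> g i'"
      unfolding g_def by auto
    have fm: "f m = w'" "p2 m = c" unfolding f_def p2_def by auto
    have F1: "\<And>i. i < Suc n \<Longrightarrow> f i $ p2 i = 1"
      using G R1 fm W1 by (metis)
    have F2: "\<And>i col. i < Suc n \<Longrightarrow> col < p2 i \<Longrightarrow> f i $ col = 0"
      using G R2 fm W2 by (metis)
    have F3: "\<And>i i'. i < Suc n \<Longrightarrow> i' < Suc n \<Longrightarrow> i' \<noteq> i \<Longrightarrow> f i' $ p2 i = 0"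
    proof -
      fix i i' assume ii: "i < Suc n" "i' < Suc n" "i' \<noteq> i"
      show "f i' $ p2 i = 0"
      proof (cases "i = m")
        case True
        then show ?thesis using G[OF ii(2)] ii(3) fm R4 by simp
      next
        case False
        show ?thesis
        proof (cases "i' = m")
          case True
          then show ?thesis using G[OF ii(1) False] fm W3 by simp
        next
          case False': False
          show ?thesis using G[OF ii(1) False] G[OF ii(2) False'] Ginj[OF False False' ii(3)[symmetric]]
              R3 by simp
        qed
      qed
    qed
    have rr: "rrefp rs2 p2" unfolding rrefp_def len2
      using mono2 F1 F2 F3 nth2 by simp
    have set2: "set rs2 = f ` {..<Suc n}" unfolding rs2_def by (auto simp del: upt_Suc)
    let ?V = "vec.span (insert v (set rs))"
    have rsV: "\<And>j. j < n \<Longrightarrow> rs!j \<in> ?V" unfolding n_def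
      by (meson insert_iff nth_mem vec.span_base)
    have sV: "s \<in> ?V" using s_sp vec.span_mono[of "set rs" "insert v (set rs)"] by blast
    have vV: "v \<in> ?V" by (simp add: vec.span_base)
    have w'V: "w' \<in> ?V" unfolding w'_def w_def using sV vV by (intro vec.span_scale vec.span_diff)
    have r'V: "\<And>j. j < n \<Longrightarrow> r' j \<in> ?V" unfolding r'_def using rsV w'V
      by (intro vec.span_diff vec.span_scale) auto
    have A: "set rs2 \<subseteq> ?V"
    proof
      fix x assume "x \<in> set rs2"
      then obtain i where i: "i < Suc n" "x = f i" using set2 by auto
      show "x \<in> ?V" using G[OF i(1)] i fm w'V r'V by (cases "i = m") auto
    qed
    let ?W = "vec.span (set rs2)"
    have w'W: "w' \<in> ?W" using set2 fm M1 by (metis lessThan_iff image_eqI le_imp_less_Suc vec.span_base)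
    have r'W: "\<And>j. j < n \<Longrightarrow> r' j \<in> ?W"
    proof -
      fix j assume j: "j < n"
      have "r' j \<in> set rs2"
      proof (cases "j < m")
        case True
        then have fj: "f j = r' j" unfolding f_def by simp
        show ?thesis unfolding set2 by (rule image_eqI[where x=j]) (use fj j in auto)
      next
        case False
        then have fj: "f (Suc j) = r' j" unfolding f_def by simp
        show ?thesis unfolding set2 by (rule image_eqI[where x="Suc j"]) (use fj j in auto)
      qed
      then show "r' j \<in> ?W" by (rule vec.span_base)
    qed
    have rsW: "\<And>j. j < n \<Longrightarrow> rs!j \<in> ?W"
    proof -
      fix j assume j: "j < n"
      have "rs!j = r' j + ((rs!j)$c) *s w'" unfolding r'_def by simp
      then show "rs!j \<in> ?W" using r'W[OF j] w'W by (metis vec.span_add vec.span_scale)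
    qed
    have sW: "s \<in> ?W" unfolding s_def using rsW by (intro vec.span_sum vec.span_scale) auto
    have "w = (w$c) *s w'" unfolding w'_def using c1 by (simp add: vector_smult_assoc)
    then have wW: "w \<in> ?W" using w'W by (metis vec.span_scale)
    have vW: "v \<in> ?W" using wW sW unfolding w_def by (metis diff_add_cancel vec.span_add)
    have B: "insert v (set rs) \<subseteq> ?W" using vW rsW unfolding n_def by (auto simp: in_set_conv_nth)
    have "?W = ?V" using A B vec.span_eq by blast
    then show ?thesis using rr sp1 by auto
  qed
qed



lemma red_gen_eq:
  fixes U :: "('a::{finite,field}^('n::{finite,linorder})) set"
  assumes "vec.subspace U"
  obtains rs p where "rrefp rs p" "vec.span (set rs) = U" "red_gen U = rev rs"
proof -
  obtain rs p where rs: "rrefp rs p" "vec.span (set rs) = vec.span U"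
    using rref_exists[of U] by auto
  have U: "vec.span U = U" using assms by simp
  have "(THE rs. is_rref rs \<and> vec.span (set rs) = U) = rs"
  proof (rule the_equality)
    show "is_rref rs \<and> vec.span (set rs) = U" using rs U by (auto simp: is_rref_alt)
  next
    fix rs' assume "is_rref rs' \<and> vec.span (set rs') = U"
    then obtain p' where "rrefp rs' p'" "vec.span (set rs') = U" by (auto simp: is_rref_alt)
    then show "rs' = rs" using rref_unique[OF rs(1) \<open>rrefp rs' p'\<close>] rs(2) U by simp
  qed
  then show ?thesis using that[OF rs(1)] rs U unfolding red_gen_def by auto
qed

lemma vlt_asym: "vlt fo u v \<Longrightarrow> \<not> vlt fo v u"
proof
  assume a: "vlt fo u v" and b: "vlt fo v u"
  obtain i where i: "u$i \<noteq> v$i" "\<forall>j<i. u$j = v$j" "fo (u$i) < fo (v$i)" using a unfolding vlt_def by blast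
  obtain i' where i': "v$i' \<noteq> u$i'" "\<forall>j<i'. v$j = u$j" "fo (v$i') < fo (u$i')" using b unfolding vlt_def by blast
  show False
  proof (rule linorder_cases[of i i'])
    assume "i < i'" then show False using i(1) i'(2) by metis
  next
    assume "i = i'" then show False using i(3) i'(3) by simp
  next
    assume "i' < i" then show False using i(2) i'(1) by metis
  qed
qed

lemma vmin_eq:
  assumes "v \<in> S" "\<forall>w\<in>S. w \<noteq> v \<longrightarrow> vlt fo v w"
  shows "vmin fo S = v"
  unfolding vmin_def
proof (rule the_equality)
  show "v \<in> S \<and> (\<forall>w\<in>S. w \<noteq> v \<longrightarrow> vlt fo v w)" using assms by blast
next
  fix v' assume h: "v' \<in> S \<and> (\<forall>w\<in>S. w \<noteq> v' \<longrightarrow> vlt fo v' w)"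
  show "v' = v"
  proof (rule ccontr)
    assume ne: "v' \<noteq> v"
    have "vlt fo v' v" using h assms(1) ne[symmetric] by blast
    moreover have "vlt fo v v'" using assms(2) h ne by blast
    ultimately show False using vlt_asym by blast
  qed
qed

lemma fo_0:
  assumes "field_order fo" "(a::'a::{finite,field}) \<noteq> 0"
  shows "fo 0 < fo a"
proof -
  have h: "fo 0 < fo 1" "a \<noteq> 1 \<Longrightarrow> fo 1 < fo a" using assms unfolding field_order_def by auto
  show ?thesis
  proof (cases "a = 1")
    case False then show ?thesis using h by (meson less_trans)
  qed (use h in simp)
qed

lemma fo_1: "field_order fo \<Longrightarrow> (a::'a::{finite,field}) \<noteq> 0 \<Longrightarrow> a \<noteq> 1 \<Longrightarrow> fo 1 < fo a"
  unfolding field_order_def by blast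

lemma rref_last_min:
  fixes rs :: "('a::{finite,field}^('n::{finite,linorder})) list"
  assumes fo: "field_order fo" and p: "rrefp rs p" and ne: "rs \<noteq> []"
    and u: "u \<in> vec.span (set rs)" "u \<noteq> 0" "u \<noteq> last rs"
  shows "vlt fo (last rs) u"
proof -
  define k where "k = length rs - 1"
  have k: "k < length rs" "last rs = rs!k" using ne unfolding k_def by (auto simp: last_conv_nth)
  obtain j0 where j0: "j0 < length rs" "u$(p j0) \<noteq> 0" "\<forall>j<j0. u$(p j) = 0" "\<forall>c<p j0. u$c = 0"
    using rref_lead[OF p u(1,2)] by metis
  show ?thesis
  proof (cases "j0 < k")
    case True
    have L0: "(last rs)$(p j0) = 0" using rrefpD(4)[OF p j0(1) k(1)] True k(2) by simp
    have pk: "p j0 < p k" using rrefpD(1)[OF p True k(1)] .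
    have Lb: "\<forall>c<p j0. (last rs)$c = 0" using rrefpD(3)[OF p k(1)] pk k(2) by simp
    show ?thesis unfolding vlt_def
      by (rule exI[of _ "p j0"]) (use L0 Lb j0 fo_0[OF fo] in auto)
  next
    case False
    then have jk: "j0 = k" using j0(1) unfolding k_def by simp
    define a where "a = u$(p k)"
    have "u = (\<Sum>j<length rs. (u$(p j)) *s rs!j)" by (rule rref_rep[OF p u(1)])
    also have "\<dots> = (\<Sum>j<length rs. if j = k then a *s rs!k else 0)"
      using j0(3) jk k unfolding a_def by (intro sum.cong) (auto simp: k_def)
    also have "\<dots> = a *s last rs" using k by simp
    finally have ua: "u = a *s last rs" .
    have a0: "a \<noteq> 0" using j0(2) jk a_def by simp
    have a1: "a \<noteq> 1" using ua u(3) by auto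
    have L1: "(last rs)$(p k) = 1" using rrefpD(2)[OF p k(1)] k(2) by simp
    have Lb: "\<forall>c<p k. (last rs)$c = 0" using rrefpD(3)[OF p k(1)] k(2) by simp
    show ?thesis unfolding vlt_def
      by (rule exI[of _ "p k"]) (use L1 Lb ua a0 a1 fo_1[OF fo] in auto)
  qed
qed

lemma red_gen_hd:
  fixes U :: "('a::{finite,field}^('n::{finite,linorder})) set"
  assumes fo: "field_order fo" and U: "vec.subspace U" "U \<noteq> {0}"
  shows "red_gen U \<noteq> [] \<and> hd (red_gen U) = vmin fo (U - {0})"
proof -
  obtain rs p where rs: "rrefp rs p" "vec.span (set rs) = U" "red_gen U = rev rs"
    using red_gen_eq[OF U(1)] by metis
  have ne: "rs \<noteq> []" using rs(2) U(2) by auto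
  have hd: "hd (red_gen U) = last rs" using rs(3) ne by (simp add: hd_rev)
  have LU: "last rs \<in> U" using rs(2) ne by (metis last_in_set vec.span_base)
  have "(last rs)$(p (length rs - 1)) = 1" using rrefpD(2)[OF rs(1)] ne last_conv_nth[OF ne] by simp
  then have L0: "last rs \<noteq> 0" by auto
  have "vmin fo (U - {0}) = last rs"
    by (rule vmin_eq) (use LU L0 rref_last_min[OF fo rs(1) ne] rs(2) in auto)
  then show ?thesis using hd rs(3) ne by simp
qed

lemma sub_lt_hd:
  assumes "red_gen U \<noteq> []" "red_gen V \<noteq> []" "hd (red_gen U) \<noteq> hd (red_gen V)"
  shows "sub_lt fo U V \<longleftrightarrow> vlt fo (hd (red_gen U)) (hd (red_gen V))"
proof
  assume "sub_lt fo U V"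
  then obtain i where i: "i < length (red_gen U)" "i < length (red_gen V)" "red_gen U!i \<noteq> red_gen V!i"
      "\<forall>j<i. red_gen U!j = red_gen V!j" "vlt fo (red_gen U!i) (red_gen V!i)"
    unfolding sub_lt_def llt_def by blast
  have "i = 0" using i(4) assms(1,2,3) by (metis hd_conv_nth not_gr0)
  then show "vlt fo (hd (red_gen U)) (hd (red_gen V))" using i(5) assms by (simp add: hd_conv_nth)
next
  assume "vlt fo (hd (red_gen U)) (hd (red_gen V))"
  then show "sub_lt fo U V" unfolding sub_lt_def llt_def using assms
    by (intro exI[of _ 0]) (auto simp: hd_conv_nth)
qed



lemma span_sub: "vec.subspace X \<Longrightarrow> vec.span X = X"
  by (rule vec.span_eq_iff[THEN iffD2])

lemma sumset_span:
  fixes X Y :: "('a::{finite,field}^('n::{finite,linorder})) set"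
  assumes "vec.subspace X" "vec.subspace Y"
  shows "{x + y | x y. x \<in> X \<and> y \<in> Y} = vec.span (X \<union> Y)"
proof -
  have a: "vec.span X = X" "vec.span Y = Y" using assms span_sub by blast+
  show ?thesis unfolding vec.span_Un[of X Y] a ..
qed

lemma span_insert_sub:
  fixes X :: "('a::{finite,field}^('n::{finite,linorder})) set"
  shows "vec.subspace X \<Longrightarrow> v \<notin> X \<Longrightarrow> vec.dim (vec.span (insert v X)) = vec.dim X + 1"
proof -
  assume a: "vec.subspace X" "v \<notin> X"
  have s: "vec.span X = X" by (rule span_sub[OF a(1)])
  have "vec.dim (vec.span (insert v X)) = vec.dim (insert v X)" by (rule vec.dim_span)
  also have "\<dots> = vec.dim X + 1" using vec.dim_insert[of v X] a(2) unfolding s by simp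
  finally show ?thesis .
qed

lemma sub_induct:
  fixes X Y :: "('a::{finite,field}^('n::{finite,linorder})) set"
  assumes "P X" "vec.subspace X" "vec.subspace Y" "X \<subseteq> Y"
    and step: "\<And>X v. vec.subspace X \<Longrightarrow> X \<subseteq> Y \<Longrightarrow> P X \<Longrightarrow> v \<in> Y \<Longrightarrow> v \<notin> X \<Longrightarrow> P (vec.span (insert v X))"
  shows "P Y"
proof -
  have "\<And>X. vec.dim Y - vec.dim X = d \<Longrightarrow> P X \<Longrightarrow> vec.subspace X \<Longrightarrow> X \<subseteq> Y \<Longrightarrow> P Y" for d
  proof (induction d)
    case 0
    then have "X = Y" using vec.subspace_dim_equal[of X Y] assms(3) by simp
    then show ?case using 0 by simp
  next
    case (Suc d)
    then have "X \<noteq> Y" by auto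
    then obtain v where v: "v \<in> Y" "v \<notin> X" using Suc.prems by blast
    let ?X = "vec.span (insert v X)"
    have "?X \<subseteq> Y" using v Suc.prems assms(3)
      by (metis insert_subset vec.span_eq_iff vec.span_mono)
    moreover have "vec.dim ?X = vec.dim X + 1" using span_insert_sub Suc.prems v by blast
    ultimately show ?case using Suc.IH[of ?X] step[OF Suc.prems(3,4,2) v] Suc.prems(1) by simp
  qed
  then show ?thesis using assms by blast
qed

lemma qm_facts:
  fixes \<rho> :: "('a::{finite,field}^('n::{finite,linorder})) set \<Rightarrow> nat"
  assumes "qmatroid \<rho>"
  shows "\<And>X. vec.subspace X \<Longrightarrow> \<rho> X \<le> vec.dim X"
    "\<And>X Y. vec.subspace X \<Longrightarrow> vec.subspace Y \<Longrightarrow> X \<subseteq> Y \<Longrightarrow> \<rho> X \<le> \<rho> Y"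
    "\<And>X Y. vec.subspace X \<Longrightarrow> vec.subspace Y \<Longrightarrow> \<rho> (vec.span (X \<union> Y)) + \<rho> (X \<inter> Y) \<le> \<rho> X + \<rho> Y"
proof -
  show "\<And>X. vec.subspace X \<Longrightarrow> \<rho> X \<le> vec.dim X" using assms unfolding qmatroid_def by blast
  show "\<And>X Y. vec.subspace X \<Longrightarrow> vec.subspace Y \<Longrightarrow> X \<subseteq> Y \<Longrightarrow> \<rho> X \<le> \<rho> Y"
    using assms unfolding qmatroid_def by blast
  fix X Y :: "('a::{finite,field}^('n::{finite,linorder})) set" assume XY: "vec.subspace X" "vec.subspace Y"
  have "\<rho> {x + y | x y. x \<in> X \<and> y \<in> Y} + \<rho> (X \<inter> Y) \<le> \<rho> X + \<rho> Y"
    using assms XY unfolding qmatroid_def by blast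
  then show "\<rho> (vec.span (X \<union> Y)) + \<rho> (X \<inter> Y) \<le> \<rho> X + \<rho> Y" using sumset_span[OF XY] by simp
qed

lemma rho_insert:
  assumes qm: "qmatroid \<rho>" and X: "vec.subspace X"
  shows "\<rho> (vec.span (insert v X)) \<le> \<rho> X + 1"
proof -
  have e: "vec.span (X \<union> vec.span {v}) = vec.span (insert v X)"
    unfolding vec.span_eq
    by (auto intro: vec.span_base vec.span_mono[THEN subsetD]
        simp: vec.span_superset[THEN subsetD])
  have "\<rho> (vec.span {v}) \<le> vec.dim (vec.span {v})" by (rule qm_facts(1)[OF qm vec.subspace_span])
  also have "\<dots> \<le> 1" using vec.dim_le_card[of "vec.span {v}" "{v}"] by simp
  finally show ?thesis using qm_facts(3)[OF qm X, of "vec.span {v}"] e by simp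
qed

lemma rho_sub:
  assumes qm: "qmatroid \<rho>" and XY: "vec.subspace X" "vec.subspace Y" "X \<subseteq> Y"
  shows "\<rho> Y + vec.dim X \<le> \<rho> X + vec.dim Y"
proof (rule sub_induct[of "\<lambda>Z. \<rho> Z + vec.dim X \<le> \<rho> X + vec.dim Z", OF _ XY])
  fix Z v assume h: "vec.subspace Z" "Z \<subseteq> Y" "\<rho> Z + vec.dim X \<le> \<rho> X + vec.dim Z"
      "v \<in> Y" "v \<notin> Z"
  show "\<rho> (vec.span (insert v Z)) + vec.dim X \<le> \<rho> X + vec.dim (vec.span (insert v Z))"
    using rho_insert[OF qm h(1), of v] span_insert_sub[OF h(1,5)] h(3) by simp
qed simp

lemma indep_sub:
  assumes qm: "qmatroid \<rho>" and Y: "indep \<rho> Y" and X: "vec.subspace X" "X \<subseteq> Y"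
  shows "indep \<rho> X"
  using rho_sub[OF qm X(1) _ X(2)] Y qm_facts(1)[OF qm X(1)] X(1) unfolding indep_def by simp

lemma basis_dim:
  fixes \<rho> :: "('a::{finite,field}^('n::{finite,linorder})) set \<Rightarrow> nat"
  assumes qm: "qmatroid \<rho>" and B: "qbasis \<rho> B"
  shows "vec.dim B = qrank \<rho>"
proof -
  have Bi: "vec.subspace B" "\<rho> B = vec.dim B" using B unfolding qbasis_def indep_def by auto
  have one: "\<rho> (vec.span (insert v B)) = \<rho> B" for v
  proof (cases "v \<in> B")
    case True
    have "vec.span (insert v B) = vec.span B" using True by (simp add: vec.span_redundant vec.span_base)
    then have "vec.span (insert v B) = B" unfolding span_sub[OF Bi(1)] .
    then show ?thesis by simp
  next
    case False
    let ?B = "vec.span (insert v B)"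
    have le: "\<rho> B \<le> \<rho> ?B" using qm_facts(2)[OF qm Bi(1), of ?B]
      by (meson subset_insertI vec.span_superset vec.subspace_span order_trans)
    have le2: "\<rho> ?B \<le> \<rho> B + 1" by (rule rho_insert[OF qm Bi(1)])
    have "\<rho> ?B \<noteq> \<rho> B + 1"
    proof
      assume eq: "\<rho> ?B = \<rho> B + 1"
      have "indep \<rho> ?B" unfolding indep_def using eq span_insert_sub[OF Bi(1) False] Bi by simp
      moreover have "B \<subseteq> ?B" by (meson subset_insertI vec.span_superset order_trans)
      ultimately have "?B = B" using B unfolding qbasis_def by blast
      then show False using False by (metis insertI1 vec.span_base)
    qed
    then show ?thesis using le le2 by simp
  qed
  have "\<rho> UNIV = \<rho> B"
  proof (rule sub_induct[of "\<lambda>Z. B \<subseteq> Z \<and> \<rho> Z = \<rho> B", OF _ Bi(1) vec.subspace_UNIV, THEN conjunct2])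
    fix Z v assume h: "vec.subspace Z" "Z \<subseteq> UNIV" "B \<subseteq> Z \<and> \<rho> Z = \<rho> B" "v \<in> UNIV" "v \<notin> Z"
    let ?Z = "vec.span (insert v Z)" and ?B = "vec.span (insert v B)"
    have s1: "?B \<subseteq> ?Z" using h(3) by (intro vec.span_mono) auto
    have s2: "Z \<subseteq> ?Z" by (meson subset_insertI vec.span_superset order_trans)
    have s3: "v \<in> vec.span (Z \<union> ?B)" by (meson UnI2 insertI1 vec.span_base)
    have s4: "Z \<subseteq> vec.span (Z \<union> ?B)" by (meson Un_upper1 vec.span_superset order_trans)
    have e: "vec.span (Z \<union> ?B) = ?Z" unfolding vec.span_eq using s1 s2 s3 s4 by auto
    have i1: "B \<subseteq> Z \<inter> ?B" using h(3) by (meson Int_subset_iff subset_insertI vec.span_superset order_trans)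
    have i2: "\<rho> B \<le> \<rho> (Z \<inter> ?B)"
      by (rule qm_facts(2)[OF qm Bi(1) _ i1]) (simp add: h(1) vec.subspace_inter)
    have sm: "\<rho> ?Z + \<rho> (Z \<inter> ?B) \<le> \<rho> Z + \<rho> ?B"
      using qm_facts(3)[OF qm h(1), of ?B] e by simp
    have m: "\<rho> Z \<le> \<rho> ?Z" using qm_facts(2)[OF qm h(1), of ?Z]
      by (meson subset_insertI vec.span_superset vec.subspace_span order_trans)
    have "B \<subseteq> ?Z" using h(3) by (meson subset_insertI vec.span_superset order_trans)
    then show "B \<subseteq> ?Z \<and> \<rho> ?Z = \<rho> B" using sm i2 m one[of v] h(3) by simp
  qed auto
  then show ?thesis using Bi unfolding qrank_def by simp
qed



lemma facetD:
  assumes "facet \<rho> A"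
  shows "length A = qrank \<rho>"
    "\<And>m. m < length A \<Longrightarrow> indep \<rho> (A!m)"
    "\<And>m. m < length A \<Longrightarrow> vec.subspace (A!m)"
    "\<And>m. m < length A \<Longrightarrow> vec.dim (A!m) = Suc m"
    "\<And>m. Suc m < length A \<Longrightarrow> A!m \<subset> A!(Suc m)"
  using assms unfolding facet_def indep_def by auto

lemma facet_chain:
  assumes "facet \<rho> A" "i \<le> j" "j < length A"
  shows "A!i \<subseteq> A!j"
  using assms(2,3)
proof (induction j)
  case 0 then show ?case by simp
next
  case (Suc j)
  show ?case
  proof (cases "i = Suc j")
    case False
    then have "A!i \<subseteq> A!j" using Suc by simp
    then show ?thesis using facetD(5)[OF assms(1), of j] Suc.prems by auto
  qed simp
qed

lemma facet_nz:
  assumes "facet \<rho> A" "m < length A"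
  shows "A!m \<noteq> {0}"
proof
  assume "A!m = {0}"
  then have "vec.dim (A!m) = 0" by simp
  then show False using facetD(4)[OF assms] by simp
qed

lemma facet_eq_off:
  assumes A: "facet \<rho> A" and B: "facet \<rho> B" and j: "j < length A"
    and s: "set A - {A!j} \<subseteq> set B"
  shows "\<And>i. i < length A \<Longrightarrow> i \<noteq> j \<Longrightarrow> B!i = A!i"
proof -
  fix i assume i: "i < length A" "i \<noteq> j"
  have "A!i \<noteq> A!j"
  proof
    assume eq: "A!i = A!j"
    have "Suc i = vec.dim (A!i)" by (rule facetD(4)[OF A i(1), symmetric])
    also have "\<dots> = vec.dim (A!j)" unfolding eq ..
    also have "\<dots> = Suc j" by (rule facetD(4)[OF A j])
    finally have "Suc i = Suc j" .
    then show False using i by simp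
  qed
  moreover have "A!i \<in> set A" using i(1) by (rule nth_mem)
  ultimately have "A!i \<in> set B" using s by blast
  then obtain i' where i': "i' < length B" "B!i' = A!i" by (metis in_set_conv_nth)
  have "Suc i' = vec.dim (B!i')" by (rule facetD(4)[OF B i'(1), symmetric])
  also have "\<dots> = vec.dim (A!i)" unfolding i'(2) ..
  also have "\<dots> = Suc i" by (rule facetD(4)[OF A i(1)])
  finally have "Suc i' = Suc i" .
  then show "B!i = A!i" using i' by simp
qed

lemma restr_elim:
  assumes A: "facet \<rho> A" and j: "j < length A" and r: "A!j \<in> restr fo \<rho> A"
  obtains B where "facet \<rho> B" "length B = length A" "\<And>i. i < length A \<Longrightarrow> i \<noteq> j \<Longrightarrow> B!i = A!i"
    "B!j \<noteq> A!j" "sub_lt fo (B!j) (A!j)"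
proof -
  obtain m B where m: "m < length A" "A!j = A!m" and B: "facet \<rho> B" "facet_lt fo B A"
      "set A - {A!m} \<subseteq> set B"
    using r unfolding restr_def by blast
  have "Suc m = vec.dim (A!m)" by (rule facetD(4)[OF A m(1), symmetric])
  also have "\<dots> = vec.dim (A!j)" unfolding m(2) ..
  also have "\<dots> = Suc j" by (rule facetD(4)[OF A j])
  finally have "m = j" by simp
  then have eq: "\<And>i. i < length A \<Longrightarrow> i \<noteq> j \<Longrightarrow> B!i = A!i"
    using facet_eq_off[OF A B(1) j] B(3) by blast
  have len: "length B = length A" using facetD(1)[OF A] facetD(1)[OF B(1)] by simp
  obtain e where e: "e < length B" "e < length A" "B!e \<noteq> A!e" "sub_lt fo (B!e) (A!e)"
    using B(2) unfolding facet_lt_def by blast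
  have "e = j"
  proof (rule ccontr)
    assume "e \<noteq> j"
    then have "B!e = A!e" using eq e(2) by blast
    then show False using e(3) by simp
  qed
  then show ?thesis using that[OF B(1) len eq] e by blast
qed

lemma restr_intro:
  assumes A: "facet \<rho> A" and j: "j < length A" and X: "indep \<rho> X" "vec.dim X = Suc j"
    and lo: "j > 0 \<Longrightarrow> A!(j - 1) \<subset> X" and hi: "Suc j < length A \<Longrightarrow> X \<subset> A!(Suc j)"
    and ne: "X \<noteq> A!j" and lt: "sub_lt fo X (A!j)"
  shows "A!j \<in> restr fo \<rho> A"
proof -
  define B where "B = A[j := X]"
  have len: "length B = length A" unfolding B_def by simp
  have Bn: "\<And>i. i < length A \<Longrightarrow> B!i = (if i = j then X else A!i)" unfolding B_def using j by simp
  have fB: "facet \<rho> B" unfolding facet_def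
  proof (intro conjI allI impI)
    show "length B = qrank \<rho>" using len facetD(1)[OF A] by simp
  next
    fix m assume "m < length B"
    then show "indep \<rho> (B!m)" "vec.dim (B!m) = Suc m" using Bn len X facetD(2,4)[OF A] by auto
  next
    fix m assume m: "Suc m < length B"
    show "B!m \<subset> B!(Suc m)"
    proof (cases "Suc m = j")
      case True
      then show ?thesis using Bn m len lo by auto
    next
      case False
      show ?thesis
      proof (cases "m = j")
        case True
        then show ?thesis using Bn m len hi by auto
      next
        case False': False
        then show ?thesis using Bn m len False facetD(5)[OF A] by auto
      qed
    qed
  qed
  have "facet_lt fo B A" unfolding facet_lt_def
    by (rule exI[of _ j]) (use Bn len j ne lt in auto)
  moreover have "set A - {A!j} \<subseteq> set B"
  proof
    fix x assume "x \<in> set A - {A!j}"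
    then obtain i where i: "i < length A" "x = A!i" "i \<noteq> j" by (auto simp: in_set_conv_nth)
    then have "B!i = x" using Bn by simp
    then show "x \<in> set B" using i len by (metis nth_mem)
  qed
  ultimately show ?thesis unfolding restr_def using fB j by blast
qed

lemma hyperplane:
  fixes W :: "('a::{finite,field}^('n::{finite,linorder})) set"
  assumes W: "vec.subspace W" "vec.dim W = Suc d" and m: "m \<in> W" "m \<noteq> 0"
  obtains W' where "vec.subspace W'" "W' \<subseteq> W" "vec.dim W' = d" "m \<notin> W'"
proof -
  have "vec.independent {m}" using m(2) by simp
  then obtain B where B: "{m} \<subseteq> B" "B \<subseteq> W" "vec.independent B" "W \<subseteq> vec.span B"
    using vec.maximal_independent_subset_extend[of "{m}" W] m(1) by blast
  have cB: "card B = Suc d" using vec.basis_card_eq_dim[OF B(2,4,3)] W(2) by simp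
  have fB: "finite B" using vec.finiteI_independent[OF B(3)] .
  have mB: "m \<in> B" using B(1) by simp
  define W' where "W' = vec.span (B - {m})"
  have iB': "vec.independent (B - {m})" using vec.independent_mono[OF B(3)] by blast
  have "vec.dim W' = card (B - {m})" unfolding W'_def by (rule vec.dim_span_eq_card_independent[OF iB'])
  then have d: "vec.dim W' = d" using cB fB mB by simp
  have sub: "W' \<subseteq> W" unfolding W'_def using B(2) span_sub[OF W(1)]
    by (metis Diff_subset order_trans vec.span_mono)
  have "vec.independent (insert m (B - {m}))" using B(3) mB by (simp add: insert_absorb)
  then have "m \<notin> W'" unfolding W'_def using vec.independent_insert by (metis Diff_iff insertI1)
  then show ?thesis using that[of W'] d sub W'_def by simp
qed



lemma vmin_prop:
  fixes U :: "('a::{finite,field}^('n::{finite,linorder})) set"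
  assumes fo: "field_order fo" and U: "vec.subspace U" "U \<noteq> {0}"
  shows "vmin fo (U - {0}) \<in> U" "vmin fo (U - {0}) \<noteq> 0"
    "\<And>w. w \<in> U \<Longrightarrow> w \<noteq> 0 \<Longrightarrow> w \<noteq> vmin fo (U - {0}) \<Longrightarrow> vlt fo (vmin fo (U - {0})) w"
proof -
  obtain rs p where rs: "rrefp rs p" "vec.span (set rs) = U" "red_gen U = rev rs"
    using red_gen_eq[OF U(1)] by metis
  have ne: "rs \<noteq> []" using rs(2) U(2) by auto
  have LU: "last rs \<in> U" using rs(2) ne by (metis last_in_set vec.span_base)
  have "(last rs)$(p (length rs - 1)) = 1" using rrefpD(2)[OF rs(1)] ne last_conv_nth[OF ne] by simp
  then have L0: "last rs \<noteq> 0" by auto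
  have e: "vmin fo (U - {0}) = last rs"
    by (rule vmin_eq) (use LU L0 rref_last_min[OF fo rs(1) ne] rs(2) in auto)
  show "vmin fo (U - {0}) \<in> U" "vmin fo (U - {0}) \<noteq> 0" using e LU L0 by auto
  fix w assume "w \<in> U" "w \<noteq> 0" "w \<noteq> vmin fo (U - {0})"
  then show "vlt fo (vmin fo (U - {0})) w" using e rref_last_min[OF fo rs(1) ne] rs(2) by auto
qed

lemma flag:
  fixes W :: "('a::{finite,field}^('n::{finite,linorder})) set"
  assumes fo: "field_order fo"
  shows "vec.subspace W \<Longrightarrow> vec.dim W = d \<Longrightarrow> \<exists>L. length L = d \<and>
    (\<forall>m<d. vec.subspace (L!m) \<and> vec.dim (L!m) = Suc m \<and> L!m \<subseteq> W) \<and>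
    (\<forall>m. Suc m < d \<longrightarrow> L!m \<subset> L!(Suc m) \<and> vmin fo (L!(Suc m) - {0}) \<notin> L!m) \<and>
    (0 < d \<longrightarrow> L!(d - 1) = W)"
proof (induction d arbitrary: W)
  case 0
  show ?case by (rule exI[of _ "[]"]) simp
next
  case (Suc d)
  have Wnz: "W \<noteq> {0}" using Suc.prems by auto
  define \<mu> where "\<mu> = vmin fo (W - {0})"
  have mu: "\<mu> \<in> W" "\<mu> \<noteq> 0" using vmin_prop[OF fo Suc.prems(1) Wnz] unfolding \<mu>_def by auto
  obtain W' where W': "vec.subspace W'" "W' \<subseteq> W" "vec.dim W' = d" "\<mu> \<notin> W'"
    using hyperplane[OF Suc.prems mu] by metis
  obtain L' where L': "length L' = d"
    "\<forall>m<d. vec.subspace (L'!m) \<and> vec.dim (L'!m) = Suc m \<and> L'!m \<subseteq> W'"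
    "\<forall>m. Suc m < d \<longrightarrow> L'!m \<subset> L'!(Suc m) \<and> vmin fo (L'!(Suc m) - {0}) \<notin> L'!m"
    "0 < d \<longrightarrow> L'!(d - 1) = W'"
    using Suc.IH[OF W'(1,3)] by blast
  define L where "L = L' @ [W]"
  have Ln: "\<And>m. m < Suc d \<Longrightarrow> L!m = (if m < d then L'!m else W)"
    unfolding L_def using L'(1) by (simp add: nth_append)
  have WW': "W' \<subset> W" using W' Suc.prems(2) by auto
  show ?case
  proof (rule exI[of _ L], intro conjI allI impI)
    show "length L = Suc d" unfolding L_def using L'(1) by simp
  next
    fix m assume m: "m < Suc d"
    then show "vec.subspace (L!m)" "vec.dim (L!m) = Suc m" "L!m \<subseteq> W"
    proof -
      have "vec.subspace (L!m) \<and> vec.dim (L!m) = Suc m \<and> L!m \<subseteq> W"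
      proof (cases "m < d")
        case True
        then have a: "L!m = L'!m" using Ln[OF m] by simp
        show ?thesis unfolding a using L'(2) True W'(2) by blast
      next
        case False
        then have a: "L!m = W" "m = d" using Ln[OF m] m by auto
        show ?thesis unfolding a(1) using Suc.prems a(2) by blast
      qed
      then show "vec.subspace (L!m)" "vec.dim (L!m) = Suc m" "L!m \<subseteq> W" by blast+
    qed
  next
    fix m assume m: "Suc m < Suc d"
    show "L!m \<subset> L!(Suc m)" "vmin fo (L!(Suc m) - {0}) \<notin> L!m"
    proof -
      have "L!m \<subset> L!(Suc m) \<and> vmin fo (L!(Suc m) - {0}) \<notin> L!m"
      proof (cases "Suc m < d")
        case True
        have a: "L!m = L'!m" using Ln[of m] True by simp
        have b: "L!(Suc m) = L'!(Suc m)" using Ln[of "Suc m"] True by simp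
        show ?thesis unfolding a b using L'(3) True by blast
      next
        case False
        then have md: "Suc m = d" using m by simp
        have a: "L!m = L'!m" using Ln[of m] md by simp
        have a2: "L'!m = W'" using L'(4) md by (metis diff_Suc_1 zero_less_Suc)
        have b: "L!(Suc m) = W" using Ln[of "Suc m"] md by simp
        show ?thesis unfolding a a2 b using WW' W'(4) unfolding \<mu>_def by blast
      qed
      then show "L!m \<subset> L!(Suc m)" "vmin fo (L!(Suc m) - {0}) \<notin> L!m" by blast+
    qed
  next
    show "L!(Suc d - 1) = W" using Ln[of d] by simp
  qed
qed

lemma indep_full:
  fixes \<rho> :: "('a::{finite,field}^('n::{finite,linorder})) set \<Rightarrow> nat"
  assumes qm: "qmatroid \<rho>" and X: "indep \<rho> X" "vec.dim X = qrank \<rho>"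
  shows "qbasis \<rho> X"
  unfolding qbasis_def
proof (intro conjI allI impI)
  show "indep \<rho> X" by fact
  fix U assume U: "indep \<rho> U \<and> X \<subseteq> U"
  have "vec.dim U = \<rho> U" using U unfolding indep_def by simp
  also have "\<dots> \<le> \<rho> UNIV" using qm_facts(2)[OF qm, of U UNIV] U unfolding indep_def by simp
  also have "\<dots> = vec.dim X" using X(2) unfolding qrank_def by simp
  finally show "U = X" using vec.subspace_dim_equal[of X U] X(1) U unfolding indep_def by simp
qed



lemma psub_dim:
  fixes X Y :: "('a::{finite,field}^('n::{finite,linorder})) set"
  assumes "vec.subspace X" "vec.subspace Y" "X \<subseteq> Y" "X \<noteq> Y"
  shows "vec.dim X < vec.dim Y"
proof -
  have "vec.span X \<subset> vec.span Y" unfolding span_sub[OF assms(1)] span_sub[OF assms(2)] using assms(3,4) by blast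
  then show ?thesis by (rule vec.dim_psubset)
qed

lemma dim_ne:
  fixes X Y :: "('a::{finite,field}^('n::{finite,linorder})) set"
  assumes "vec.dim X \<noteq> vec.dim Y"
  shows "X \<noteq> Y"
  using assms by blast

lemma forward:
  fixes fo :: "'a::{finite,field} \<Rightarrow> nat"
    and \<rho> :: "('a^('n::{finite,linorder})) set \<Rightarrow> nat"
  assumes fo: "field_order fo" and qm: "qmatroid \<rho>" and r1: "qrank \<rho> \<ge> 1"
    and A: "facet \<rho> A" and R: "restr fo \<rho> A = set A"
  shows "\<exists>F G. qbasis \<rho> F \<and> qbasis \<rho> G \<and> sub_lt fo F G \<and>
       vec.dim (F \<inter> G) = qrank \<rho> - 1 \<and> vmin fo (G - {0}) \<notin> F"
proof -
  define r where "r = length A"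
  have r: "r = qrank \<rho>" "r \<ge> 1" using facetD(1)[OF A] r1 unfolding r_def by auto
  define t where "t = r - 1"
  have t: "t < r" "Suc t = r" using r(2) unfolding t_def by auto
  have inR: "\<And>j. j < r \<Longrightarrow> A!j \<in> restr fo \<rho> A" using R unfolding r_def by simp
  obtain B where B: "facet \<rho> B" "length B = r" "\<And>i. i < r \<Longrightarrow> i \<noteq> t \<Longrightarrow> B!i = A!i"
      "B!t \<noteq> A!t" "sub_lt fo (B!t) (A!t)"
    using restr_elim[OF A _ inR[OF t(1)]] t(1) unfolding r_def by metis
  define F where "F = B!t"
  define G where "G = A!t"
  have Fs: "vec.subspace F" "vec.dim F = r" "indep \<rho> F"
    using facetD(2,3,4)[OF B(1), of t] B(2) t unfolding F_def by auto
  have Gs: "vec.subspace G" "vec.dim G = r" "indep \<rho> G"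
    using facetD(2,3,4)[OF A, of t] t unfolding G_def r_def by auto
  have FG: "F \<noteq> G" using B(4) unfolding F_def G_def .
  have bF: "qbasis \<rho> F" by (rule indep_full[OF qm Fs(3)]) (use Fs(2) r in simp)
  have bG: "qbasis \<rho> G" by (rule indep_full[OF qm Gs(3)]) (use Gs(2) r in simp)
  have HS: "vec.subspace (F \<inter> G)" using Fs Gs by (simp add: vec.subspace_inter)
  have HG: "F \<inter> G \<noteq> G"
  proof
    assume "F \<inter> G = G"
    then have "G \<subseteq> F" by blast
    then have "G = F" using vec.subspace_dim_equal[OF Gs(1) Fs(1)] Fs(2) Gs(2) by simp
    then show False using FG by simp
  qed
  have up: "vec.dim (F \<inter> G) < r" using psub_dim[OF HS Gs(1) _ HG] Gs(2) by simp
  have low: "t > 0 \<Longrightarrow> A!(t - 1) \<subseteq> F \<inter> G \<and> vec.dim (A!(t - 1)) = t \<and> vec.subspace (A!(t - 1))"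
  proof -
    assume t0: "t > 0"
    have e: "B!(t - 1) = A!(t - 1)" using B(3)[of "t - 1"] t t0 by simp
    have "A!(t - 1) \<subseteq> G" unfolding G_def using facet_chain[OF A, of "t - 1" t] t unfolding r_def by simp
    moreover have "B!(t - 1) \<subseteq> F" unfolding F_def using facet_chain[OF B(1), of "t - 1" t] t B(2) by simp
    moreover have "vec.dim (A!(t - 1)) = t" "vec.subspace (A!(t - 1))"
      using facetD(3,4)[OF A, of "t - 1"] t t0 unfolding r_def by auto
    ultimately show ?thesis using e by auto
  qed
  have dimH: "vec.dim (F \<inter> G) = t"
  proof (cases "t = 0")
    case True then show ?thesis using up t(2) by (simp del: vec.dim_eq_0)
  next
    case False
    then have "t \<le> vec.dim (F \<inter> G)" using low vec.dim_subset[of "A!(t - 1)" "F \<inter> G"] by auto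
    then show ?thesis using up t by simp
  qed
  define g where "g = vmin fo (G - {0})"
  have Gnz: "G \<noteq> {0}" using facet_nz[OF A, of t] t unfolding G_def r_def by simp
  note gp = vmin_prop[OF fo Gs(1) Gnz, folded g_def]
  have gF: "g \<notin> F"
  proof
    assume gF: "g \<in> F"
    then have gH: "g \<in> F \<inter> G" using gp(1) by simp
    show False
    proof (cases "t = 0")
      case True
      then have "F \<inter> G \<subseteq> {0}" using dimH by simp
      then show False using gH gp(2) by blast
    next
      case False
      have "A!(t - 1) = F \<inter> G" using vec.subspace_dim_equal[of "A!(t - 1)" "F \<inter> G"] low False HS dimH by simp
      then have gA: "g \<in> A!(t - 1)" using gH by simp
      define k where "k = (LEAST k. g \<in> A!k)"
      have k1: "g \<in> A!k" unfolding k_def by (rule LeastI[of _ "t - 1"]) (rule gA)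
      have k2: "k \<le> t - 1" unfolding k_def by (rule Least_le) (rule gA)
      have k3: "\<And>k'. k' < k \<Longrightarrow> g \<notin> A!k'" unfolding k_def by (rule not_less_Least)
      have kr: "k < r" "k < t" using k2 t False by auto
      obtain B' where B': "facet \<rho> B'" "length B' = r" "\<And>i. i < r \<Longrightarrow> i \<noteq> k \<Longrightarrow> B'!i = A!i"
          "B'!k \<noteq> A!k" "sub_lt fo (B'!k) (A!k)"
        using restr_elim[OF A _ inR[OF kr(1)]] kr(1) unfolding r_def by metis
      define K where "K = B'!k"
      have Ks: "vec.subspace K" "vec.dim K = Suc k"
        using facetD(3,4)[OF B'(1), of k] B'(2) kr unfolding K_def by auto
      have As: "vec.subspace (A!k)" "vec.dim (A!k) = Suc k"
        using facetD(3,4)[OF A, of k] kr unfolding r_def by auto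
      have gK: "g \<notin> K"
      proof
        assume gK: "g \<in> K"
        define P where "P = (if k = 0 then {0} else A!(k - 1))"
        have Ps: "vec.subspace P" "vec.dim P = k"
          using facetD(3,4)[OF A, of "k - 1"] kr unfolding P_def r_def by auto
        have PK: "P \<subseteq> K"
        proof (cases "k = 0")
          case True then show ?thesis unfolding P_def using vec.subspace_0[OF Ks(1)] by simp
        next
          case False
          have "B'!(k - 1) = A!(k - 1)" using B'(3)[of "k - 1"] kr False by simp
          moreover have "B'!(k - 1) \<subseteq> B'!k" using facet_chain[OF B'(1), of "k - 1" k] kr B'(2) by simp
          ultimately show ?thesis unfolding P_def K_def using False by simp
        qed
        have PA: "P \<subseteq> A!k"
        proof (cases "k = 0")
          case True then show ?thesis unfolding P_def using vec.subspace_0[OF As(1)] by simp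
        next
          case False
          then show ?thesis unfolding P_def using facet_chain[OF A, of "k - 1" k] kr unfolding r_def by simp
        qed
        have gP: "g \<notin> P"
        proof (cases "k = 0")
          case True then show ?thesis unfolding P_def using gp(2) by simp
        next
          case False then show ?thesis unfolding P_def using k3[of "k - 1"] by simp
        qed
        define Q where "Q = vec.span (insert g P)"
        have Qd: "vec.dim Q = Suc k" unfolding Q_def using span_insert_sub[OF Ps(1) gP] Ps(2) by simp
        have QK: "Q \<subseteq> K"
        proof -
          have "vec.span (insert g P) \<subseteq> vec.span K" by (rule vec.span_mono) (use PK gK in auto)
          then show ?thesis unfolding Q_def span_sub[OF Ks(1)] .
        qed
        have QA: "Q \<subseteq> A!k"
        proof -
          have "vec.span (insert g P) \<subseteq> vec.span (A!k)" by (rule vec.span_mono) (use PA k1 in auto)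
          then show ?thesis unfolding Q_def span_sub[OF As(1)] .
        qed
        have "Q = K" using vec.subspace_dim_equal[of Q K] QK Qd Ks unfolding Q_def by simp
        moreover have "Q = A!k" using vec.subspace_dim_equal[of Q "A!k"] QA Qd As unfolding Q_def by simp
        ultimately show False using B'(4) unfolding K_def by simp
      qed
      have KG: "K \<subseteq> G"
      proof -
        have "B'!(Suc k) = A!(Suc k)" using B'(3)[of "Suc k"] kr t by simp
        moreover have "K \<subseteq> B'!(Suc k)" unfolding K_def using facet_chain[OF B'(1), of k "Suc k"] kr t B'(2) by simp
        moreover have "A!(Suc k) \<subseteq> G" unfolding G_def using facet_chain[OF A, of "Suc k" t] kr t unfolding r_def by simp
        ultimately show ?thesis by simp
      qed
      have AG: "A!k \<subseteq> G" unfolding G_def using facet_chain[OF A, of k t] kr t unfolding r_def by simp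
      have Knz: "K \<noteq> {0}" unfolding K_def using facet_nz[OF B'(1), of k] kr B'(2) by simp
      have Anz: "A!k \<noteq> {0}" using facet_nz[OF A, of k] kr unfolding r_def by simp
      have hA: "red_gen (A!k) \<noteq> []" "hd (red_gen (A!k)) = vmin fo (A!k - {0})"
        using red_gen_hd[OF fo As(1) Anz] by auto
      have vA: "vmin fo (A!k - {0}) = g"
        by (rule vmin_eq) (use k1 gp AG in auto)
      have hK: "red_gen K \<noteq> []" "hd (red_gen K) = vmin fo (K - {0})"
        using red_gen_hd[OF fo Ks(1) Knz] by auto
      define b where "b = vmin fo (K - {0})"
      note bp = vmin_prop[OF fo Ks(1) Knz, folded b_def]
      have bg: "b \<noteq> g" using bp(1) gK by auto
      have "vlt fo g b" using gp(3)[of b] bp(1,2) KG bg by auto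
      moreover have "sub_lt fo K (A!k)" using B'(5) unfolding K_def .
      then have "vlt fo b g" using sub_lt_hd[OF hK(1) hA(1)] hK(2) hA(2) vA bg unfolding b_def by simp
      ultimately show False using vlt_asym by blast
    qed
  qed
  show ?thesis
    by (rule exI[of _ F], rule exI[of _ G]) (use bF bG B(5) dimH gF r t in \<open>auto simp: F_def G_def g_def\<close>)
qed



lemma backward:
  fixes fo :: "'a::{finite,field} \<Rightarrow> nat"
    and \<rho> :: "('a^('n::{finite,linorder})) set \<Rightarrow> nat"
  assumes fo: "field_order fo" and qm: "qmatroid \<rho>" and r1: "qrank \<rho> \<ge> 1"
    and bF: "qbasis \<rho> F" and bG: "qbasis \<rho> G" and lt: "sub_lt fo F G"
    and dH: "vec.dim (F \<inter> G) = qrank \<rho> - 1" and gF: "vmin fo (G - {0}) \<notin> F"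
  shows "\<exists>A. facet \<rho> A \<and> restr fo \<rho> A = set A"
proof -
  define r where "r = qrank \<rho>"
  define t where "t = r - 1"
  have t: "Suc t = r" "t < r" using r1 unfolding t_def r_def by auto
  have Fs: "vec.subspace F" "vec.dim F = r" "indep \<rho> F"
    using bF basis_dim[OF qm bF] unfolding qbasis_def indep_def r_def by auto
  have Gs: "vec.subspace G" "vec.dim G = r" "indep \<rho> G"
    using bG basis_dim[OF qm bG] unfolding qbasis_def indep_def r_def by auto
  have FG: "F \<noteq> G" using lt unfolding sub_lt_def llt_def by auto
  define H where "H = F \<inter> G"
  have Hs: "vec.subspace H" "vec.dim H = t" "H \<subseteq> F" "H \<subseteq> G"
    using Fs Gs dH unfolding H_def t_def r_def by (auto simp: vec.subspace_inter)
  define g where "g = vmin fo (G - {0})"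
  have Gnz: "G \<noteq> {0}" using Gs(2) t by auto
  note gp = vmin_prop[OF fo Gs(1) Gnz, folded g_def]
  have gH: "g \<notin> H" using gF unfolding g_def H_def by simp
  obtain L where L: "length L = t"
    "\<forall>m<t. vec.subspace (L!m) \<and> vec.dim (L!m) = Suc m \<and> L!m \<subseteq> H"
    "\<forall>m. Suc m < t \<longrightarrow> L!m \<subset> L!(Suc m) \<and> vmin fo (L!(Suc m) - {0}) \<notin> L!m"
    "0 < t \<longrightarrow> L!(t - 1) = H"
    using flag[OF fo Hs(1,2)] by blast
  define A where "A = L @ [G]"
  have lenA: "length A = r" unfolding A_def using L(1) t by simp
  have An: "\<And>m. m < r \<Longrightarrow> A!m = (if m < t then L!m else G)"
    unfolding A_def using L(1) t by (simp add: nth_append)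
  have AL: "\<And>m. m < t \<Longrightarrow> A!m = L!m" using An t by simp
  have AG: "A!t = G" using An t by simp
  have HG: "H \<subset> G" using Hs(2,4) Gs(2) t by auto
  have HF: "H \<subset> F" using Hs(2,3) Fs(2) t by auto
  have Aind: "\<And>m. m < r \<Longrightarrow> indep \<rho> (A!m) \<and> vec.dim (A!m) = Suc m"
  proof -
    fix m assume m: "m < r"
    show "indep \<rho> (A!m) \<and> vec.dim (A!m) = Suc m"
    proof (cases "m < t")
      case True
      have "L!m \<subseteq> G" using L(2) True Hs(4) by blast
      then have "indep \<rho> (L!m)" using indep_sub[OF qm Gs(3)] L(2) True by blast
      then show ?thesis using AL[OF True] L(2) True by simp
    next
      case False
      then have "m = t" using m t by simp
      then show ?thesis using AG Gs t by simp
    qed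
  qed
  have Ach: "\<And>m. Suc m < r \<Longrightarrow> A!m \<subset> A!(Suc m)"
  proof -
    fix m assume m: "Suc m < r"
    show "A!m \<subset> A!(Suc m)"
    proof (cases "Suc m < t")
      case True
      then show ?thesis using AL[of m] AL[of "Suc m"] L(3) by simp
    next
      case False
      then have mt: "Suc m = t" using m t by simp
      have "A!m = H" using AL[of m] L(4) mt by (metis diff_Suc_1 lessI zero_less_Suc)
      then show ?thesis using AG mt HG by simp
    qed
  qed
  have fA: "facet \<rho> A" unfolding facet_def using lenA Aind Ach r_def by auto
  have allR: "\<And>j. j < r \<Longrightarrow> A!j \<in> restr fo \<rho> A"
  proof -
    fix j assume j: "j < r"
    show "A!j \<in> restr fo \<rho> A"
    proof (cases "j = t")
      case True
      show ?thesis
      proof (rule restr_intro[OF fA _ Fs(3)])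
        show "j < length A" using j lenA by simp
        show "vec.dim F = Suc j" using Fs(2) True t by simp
        show "A!(j - 1) \<subset> F" if "j > 0"
          using AL[of "j - 1"] L(4) True that HF by simp
        show "F \<subset> A!(Suc j)" if "Suc j < length A" using that lenA True t by simp
        show "F \<noteq> A!j" using FG AG True by simp
        show "sub_lt fo F (A!j)" using lt AG True by simp
      qed
    next
      case False
      then have jt: "j < t" using j t by simp
      define N where "N = A!(Suc j)"
      have Ns: "vec.subspace N" "indep \<rho> N" "vec.dim N = Suc (Suc j)"
        using Aind[of "Suc j"] jt t unfolding N_def indep_def by auto
      have Nnz: "N \<noteq> {0}" using facet_nz[OF fA, of "Suc j"] jt t lenA unfolding N_def by simp
      define \<mu> where "\<mu> = vmin fo (N - {0})"
      note mp = vmin_prop[OF fo Ns(1) Nnz, folded \<mu>_def]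
      have Ajs: "vec.subspace (A!j)" "vec.dim (A!j) = Suc j" "A!j \<subseteq> N"
        using Aind[of j] Ach[of j] jt t unfolding N_def indep_def by auto
      have muA: "\<mu> \<notin> A!j"
      proof (cases "Suc j < t")
        case True
        then show ?thesis using L(3) AL[of j] AL[of "Suc j"] unfolding \<mu>_def N_def by simp
      next
        case False
        then have sj: "Suc j = t" using jt by simp
        then have "N = G" unfolding N_def using AG by simp
        moreover have "A!j = H" using AL[of j] L(4) sj by (metis diff_Suc_1 lessI zero_less_Suc)
        ultimately show ?thesis using gH unfolding \<mu>_def g_def by simp
      qed
      define P where "P = (if j = 0 then {0} else A!(j - 1))"
      have Ps: "vec.subspace P" "vec.dim P = j" "P \<subseteq> A!j"
      proof -
        have "vec.subspace P \<and> vec.dim P = j \<and> P \<subseteq> A!j"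
        proof (cases "j = 0")
          case True
          then show ?thesis unfolding P_def using vec.subspace_0[OF Ajs(1)] by simp
        next
          case False
          have "vec.subspace (A!(j - 1))" "vec.dim (A!(j - 1)) = j"
            using Aind[of "j - 1"] jt t False unfolding indep_def by auto
          moreover have "A!(j - 1) \<subseteq> A!j" using Ach[of "j - 1"] jt t False by auto
          ultimately show ?thesis unfolding P_def using False by simp
        qed
        then show "vec.subspace P" "vec.dim P = j" "P \<subseteq> A!j" by blast+
      qed
      have muP: "\<mu> \<notin> P" using muA Ps(3) by blast
      define K where "K = vec.span (insert \<mu> P)"
      have Kd: "vec.dim K = Suc j" unfolding K_def using span_insert_sub[OF Ps(1) muP] Ps(2) by simp
      have KN: "K \<subseteq> N"
      proof -
        have "vec.span (insert \<mu> P) \<subseteq> vec.span N" by (rule vec.span_mono) (use mp(1) Ps(3) Ajs(3) in auto)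
        then show ?thesis unfolding K_def span_sub[OF Ns(1)] .
      qed
      have Ks: "vec.subspace K" unfolding K_def by simp
      have Ki: "indep \<rho> K" by (rule indep_sub[OF qm Ns(2) Ks KN])
      have muK: "\<mu> \<in> K" unfolding K_def by (simp add: vec.span_base)
      have PK: "P \<subseteq> K" unfolding K_def by (meson subset_insertI vec.span_superset order_trans)
      have Knz: "K \<noteq> {0}" using muK mp(2) by auto
      have Anz: "A!j \<noteq> {0}" using facet_nz[OF fA, of j] j lenA by simp
      have hK: "red_gen K \<noteq> []" "hd (red_gen K) = vmin fo (K - {0})"
        using red_gen_hd[OF fo Ks Knz] by auto
      have hA: "red_gen (A!j) \<noteq> []" "hd (red_gen (A!j)) = vmin fo (A!j - {0})"
        using red_gen_hd[OF fo Ajs(1) Anz] by auto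
      have vK: "vmin fo (K - {0}) = \<mu>"
        by (rule vmin_eq) (use muK mp KN in auto)
      define a where "a = vmin fo (A!j - {0})"
      note ap = vmin_prop[OF fo Ajs(1) Anz, folded a_def]
      have am: "a \<noteq> \<mu>" using ap(1) muA by auto
      have "vlt fo \<mu> a" using mp(3)[of a] ap(1,2) Ajs(3) am by auto
      then have slt: "sub_lt fo K (A!j)"
        using sub_lt_hd[OF hK(1) hA(1)] hK(2) hA(2) vK am unfolding a_def by simp
      show ?thesis
      proof (rule restr_intro[OF fA _ Ki Kd])
        show "j < length A" using j lenA by simp
        show "A!(j - 1) \<subset> K" if "j > 0"
        proof -
          have "P = A!(j - 1)" unfolding P_def using that by simp
          then show ?thesis using PK Ps(2) Kd by auto
        qed
        show "K \<subset> A!(Suc j)" if "Suc j < length A" using KN Kd Ns(3) unfolding N_def by auto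
        show "K \<noteq> A!j" using muK muA by auto
        show "sub_lt fo K (A!j)" by (rule slt)
      qed
    qed
  qed
  have "restr fo \<rho> A = set A"
  proof
    show "restr fo \<rho> A \<subseteq> set A" unfolding restr_def by auto
    show "set A \<subseteq> restr fo \<rho> A" using allR lenA by (auto simp: in_set_conv_nth)
  qed
  then show ?thesis using fA by blast
qed

theorem lemma5p8:
  fixes fo :: "'a::{finite,field} \<Rightarrow> nat"
    and \<rho> :: "('a^('n::{finite,linorder})) set \<Rightarrow> nat"
  assumes "field_order fo"
    and "qmatroid \<rho>"
    and "qrank \<rho> \<ge> 1"
  shows "(\<exists>A. facet \<rho> A \<and> restr fo \<rho> A = set A) \<longleftrightarrow>
    (\<exists>F G. qbasis \<rho> F \<and> qbasis \<rho> G \<and> sub_lt fo F G \<and>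
       vec.dim (F \<inter> G) = qrank \<rho> - 1 \<and> vmin fo (G - {0}) \<notin> F)"
proof
  assume "\<exists>A. facet \<rho> A \<and> restr fo \<rho> A = set A"
  then obtain A where "facet \<rho> A" "restr fo \<rho> A = set A" by blast
  then show "\<exists>F G. qbasis \<rho> F \<and> qbasis \<rho> G \<and> sub_lt fo F G \<and>
       vec.dim (F \<inter> G) = qrank \<rho> - 1 \<and> vmin fo (G - {0}) \<notin> F"
    using forward[OF assms] by blast
next
  assume "\<exists>F G. qbasis \<rho> F \<and> qbasis \<rho> G \<and> sub_lt fo F G \<and>
       vec.dim (F \<inter> G) = qrank \<rho> - 1 \<and> vmin fo (G - {0}) \<notin> F"
  then obtain F G where "qbasis \<rho> F" "qbasis \<rho> G" "sub_lt fo F G"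
       "vec.dim (F \<inter> G) = qrank \<rho> - 1" "vmin fo (G - {0}) \<notin> F" by blast
  then show "\<exists>A. facet \<rho> A \<and> restr fo \<rho> A = set A" using backward[OF assms] by blast
qed


end
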